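(* Let $q$ be a root of unity with $q^8\ne1$, $N=\mathrm{ord}(q^4)$, $\epsilon=q^{N^2}$, $\vec w\in\mathbb C^4$, and $\sigma\in\mathbb C^\times$ with $z_0:=\epsilon^2(\sigma^N+\sigma^{-N})\ne\pm2$. Then the image of $(\Pi_s,\Pi_t):E^0_{\sigma,\vec w}\to\mathbb C^2$ is exactly the curve $\{(x,y):xy=R(z_0,\vec w)\}$, where $$R(z_0,\vec w)=\frac{\kappa(W_1,W_2,z_0)\,\kappa(W_3,W_4,z_0)}{(z_0^2-4)^2},\qquad W_j=T_N(w_j).$$
   Context: $T_N$ is the Chebyshev polynomial with $T_N(t+t^{-1})=t^N+t^{-N}$. $\kappa(a,b,c)=a^2+b^2+c^2+abc-4$. For indices $i\in\mathbb Z/N$: $\lambda'_i=q^{4i+2}\sigma+q^{-4i-2}\sigma^{-1}$, $\hat\lambda_i=q^{4i}\sigma-q^{-4i}\sigma^{-1}$, $\hat\lambda'_i=q^{4i+2}\sigma-q^{-4i-2}\sigma^{-1}$; $r_i(\sigma,\vec w)=\dfrac{\kappa(w_1,w_2,\lambda'_i)\kappa(w_3,w_4,\lambda'_i)}{\hat\lambda_i\hat\lambda_{i+1}(\hat\lambda'_i)^2}$; $E^0_{\sigma,\vec w}=\{(s_1,\dots,s_N,t_1,\dots,t_N)\in\mathbb C^{2N}:s_it_i=r_i(\sigma,\vec w)\}$; $\Pi_s=\prod_{i=1}^Ns_i$, $\Pi_t=\prod_{i=1}^Nt_i$. *)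

theory Defs
  imports Complex_Main
begin

text \<open>Chebyshev polynomial normalised so that T_N(t + 1/t) = t^N + t^(-N).\<close>
fun cheb :: "nat \<Rightarrow> complex \<Rightarrow> complex" where
  "cheb 0 x = 2"
| "cheb (Suc 0) x = x"
| "cheb (Suc (Suc n)) x = x * cheb (Suc n) x - cheb n x"

definition kappa :: "complex \<Rightarrow> complex \<Rightarrow> complex \<Rightarrow> complex" where
  "kappa a b c = a^2 + b^2 + c^2 + a*b*c - 4"

definition ordN :: "complex \<Rightarrow> nat" where
  "ordN q = (LEAST n. n > 0 \<and> (q^4)^n = 1)"

definition lam' :: "complex \<Rightarrow> complex \<Rightarrow> nat \<Rightarrow> complex" where
  "lam' q \<sigma> i = q^(4*i+2) * \<sigma> + inverse (q^(4*i+2)) * inverse \<sigma>"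

definition lamhat :: "complex \<Rightarrow> complex \<Rightarrow> nat \<Rightarrow> complex" where
  "lamhat q \<sigma> i = q^(4*i) * \<sigma> - inverse (q^(4*i)) * inverse \<sigma>"

definition lamhat' :: "complex \<Rightarrow> complex \<Rightarrow> nat \<Rightarrow> complex" where
  "lamhat' q \<sigma> i = q^(4*i+2) * \<sigma> - inverse (q^(4*i+2)) * inverse \<sigma>"

text \<open>Indices i \<in> Z/N are represented by 0..N-1; r_{i+1} for i = N-1 equals r_0
  since q^(4N) = 1 (and lamhat is evaluated at the natural number i+1 anyway).\<close>
definition r_fun :: "complex \<Rightarrow> complex \<Rightarrow> complex \<Rightarrow> complex \<Rightarrow> complex \<Rightarrow> complex \<Rightarrow> nat \<Rightarrow> complex" where
  "r_fun q \<sigma> w1 w2 w3 w4 i =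
     kappa w1 w2 (lam' q \<sigma> i) * kappa w3 w4 (lam' q \<sigma> i)
     / (lamhat q \<sigma> i * lamhat q \<sigma> (i+1) * (lamhat' q \<sigma> i)^2)"

text \<open>E^0 as a set of pairs (s,t) of coordinate functions on indices 0..N-1
  (coordinates outside this range are fixed to 0 so points correspond to C^{2N}).\<close>
definition E0 :: "complex \<Rightarrow> complex \<Rightarrow> complex \<Rightarrow> complex \<Rightarrow> complex \<Rightarrow> complex
                   \<Rightarrow> ((nat \<Rightarrow> complex) \<times> (nat \<Rightarrow> complex)) set" where
  "E0 q \<sigma> w1 w2 w3 w4 =
     {(s, t). (\<forall>i < ordN q. s i * t i = r_fun q \<sigma> w1 w2 w3 w4 i)
              \<and> (\<forall>i \<ge> ordN q. s i = 0 \<and> t i = 0)}"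

definition Rfun :: "nat \<Rightarrow> complex \<Rightarrow> complex \<Rightarrow> complex \<Rightarrow> complex \<Rightarrow> complex \<Rightarrow> complex" where
  "Rfun N z0 w1 w2 w3 w4 =
     kappa (cheb N w1) (cheb N w2) z0 * kappa (cheb N w3) (cheb N w4) z0 / (z0^2 - 4)^2"

end

theory Submission imports Defs "HOL-Computational_Algebra.Polynomial" begin

lemma prim_prod:
  fixes p x :: complex
  assumes pN: "p^N = 1" and prim: "\<And>k. 0 < k \<Longrightarrow> k < N \<Longrightarrow> p^k \<noteq> 1" and N0: "N > 0"
  shows "(\<Prod>i<N. x - p^i) = x^N - 1"
proof -
  define P where "P = (\<Prod>i<N. [:-(p^i), 1:])"
  define Q where "Q = (monom 1 N - 1 :: complex poly)"
  have inj: "inj_on (\<lambda>i. p^i) {..<N}"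
  proof (rule inj_onI)
    fix i j assume ij: "i \<in> {..<N}" "j \<in> {..<N}" "p^i = p^j"
    have p0: "p \<noteq> 0" using pN ij(1) by (cases "p = 0") (auto simp: zero_power)
    show "i = j"
    proof (rule ccontr)
      assume "i \<noteq> j"
      then consider "i < j" | "j < i" by linarith
      then show False
      proof cases
        case 1
        have "p^j = p^i * p^(j-i)" using 1 by (simp add: power_add[symmetric])
        hence "p^(j-i) = 1" using ij(3) p0 by simp
        moreover have "j - i < N" "0 < j - i" using 1 ij by auto
        ultimately show False using prim[of "j-i"] by blast
      next
        case 2
        have "p^i = p^j * p^(i-j)" using 2 by (simp add: power_add[symmetric])
        hence "p^(i-j) = 1" using ij(3) p0 by simp
        moreover have "i - j < N" "0 < i - j" using 2 ij by auto
        ultimately show False using prim[of "i-j"] by blast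
      qed
    qed
  qed
  have degP: "degree P = N" unfolding P_def
    by (subst degree_prod_eq_sum_degree) auto
  have lcP: "lead_coeff P = 1" unfolding P_def by (simp add: lead_coeff_prod)
  have degQ: "degree Q \<le> N" unfolding Q_def
    by (rule order.trans[OF degree_diff_le_max]) (auto simp: degree_monom_le)
  have cQ: "coeff Q N = 1" using N0 by (auto simp: Q_def coeff_monom)
  have "P = Q"
  proof (rule poly_eqI_degree_lead_coeff[where n=N and A="(\<lambda>i. p^i) ` {..<N}"])
    show "coeff P N = coeff Q N" using degP lcP cQ by simp
    show "N \<le> card ((\<lambda>i. p^i) ` {..<N})" using card_image[OF inj] by simp
    show "degree P \<le> N" using degP by simp
    show "degree Q \<le> N" by fact
    fix z assume "z \<in> (\<lambda>i. p^i) ` {..<N}"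
    then obtain i where "i < N" "z = p^i" by auto
    hence "poly P z = 0" unfolding P_def by (auto simp: poly_prod)
    moreover have "poly Q z = 0" using \<open>z = p^i\<close> pN
      by (simp add: Q_def poly_monom power_mult[symmetric] mult.commute power_mult)
    ultimately show "poly P z = poly Q z" by simp
  qed
  hence "poly P x = poly Q x" by simp
  thus ?thesis by (simp add: P_def Q_def poly_prod poly_monom)
qed


lemma kappa_fact:
  assumes "x \<noteq> 0" "y \<noteq> 0"
  shows "kappa (x + inverse x) (y + inverse y) c
       = (c + x*y + inverse (x*y)) * (c + x/y + y/x)"
  using assms unfolding kappa_def by (simp add: field_simps power2_eq_square)

context
  fixes p :: complex and N :: nat
  assumes pN: "p^N = 1" and prim: "\<And>k. 0 < k \<Longrightarrow> k < N \<Longrightarrow> p^k \<noteq> 1" and N0: "N > 0"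
begin

lemma p0: "p \<noteq> 0" using pN N0 by (cases "p = 0") (auto simp: power_0_left)

lemma hom: "(\<Prod>i<N. X - p^i*Y) = X^N - Y^N"
proof (cases "Y = 0")
  case True thus ?thesis using N0 by simp
next
  case False
  have "(\<Prod>i<N. X - p^i*Y) = (\<Prod>i<N. Y*(X/Y - p^i))"
    by (rule prod.cong) (auto simp: False field_simps)
  also have "\<dots> = Y^N * (\<Prod>i<N. X/Y - p^i)" by (simp add: prod.distrib)
  also have "\<dots> = Y^N * ((X/Y)^N - 1)" using prim_prod[OF pN prim N0] by simp
  also have "\<dots> = X^N - Y^N" using False by (simp add: field_simps power_divide)
  finally show ?thesis .
qed

lemma prodp: "(\<Prod>i<N. p^i) = - ((-1)^N)"
proof -
  have "(\<Prod>i<N. 0 - p^i*1) = - 1" using hom[of 0 1] N0 by simp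
  moreover have "(\<Prod>i<N. 0 - p^i*1) = (\<Prod>i<N. (-1) * p^i)" by simp
  moreover have "(\<Prod>i<N. (-1) * p^i) = (-1)^N * (\<Prod>i<N. p^i)"
    by (subst prod.distrib) simp
  ultimately have "(-1)^N * (\<Prod>i<N. p^i) = -1" by simp
  hence "(-1)^N * ((-1)^N * (\<Prod>i<N. p^i)) = (-1)^N * (-1 :: complex)" by simp
  thus ?thesis by (simp add: mult.assoc[symmetric] power_add[symmetric] flip: power_mult_distrib)
qed

lemma Gprod:
  assumes u: "u \<noteq> 0" and v: "v \<noteq> 0"
  shows "(\<Prod>i<N. u*p^i + inverse(u*p^i) - v - inverse v)
         = - ((-1)^N) * ((u^N + inverse(u^N)) - (v^N + inverse(v^N)))"
proof -
  have pi: "p^i \<noteq> 0" for i using p0 by simp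
  have "(\<Prod>i<N. u*p^i + inverse(u*p^i) - v - inverse v)
        = (\<Prod>i<N. (u*p^i - v) * (u*p^i*v - 1) / (u*p^i*v))"
    by (rule prod.cong) (auto simp: u v p0 field_simps)
  also have "\<dots> = (\<Prod>i<N. u*p^i - v) * (\<Prod>i<N. u*p^i*v - 1) / (\<Prod>i<N. u*p^i*v)"
    by (simp add: prod_dividef prod.distrib)
  also have A: "(\<Prod>i<N. u*p^i - v) = (-1)^N * (v^N - u^N)"
  proof -
    have "(\<Prod>i<N. u*p^i - v) = (\<Prod>i<N. (-1) * (v - p^i*u))"
      by (rule prod.cong) (auto simp: algebra_simps)
    also have "\<dots> = (-1)^N * (\<Prod>i<N. (v - p^i*u))" by (subst prod.distrib) simp
    finally show ?thesis by (simp add: hom)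
  qed
  also have B: "(\<Prod>i<N. u*p^i*v - 1) = (-1)^N * (1 - (u*v)^N)"
  proof -
    have "(\<Prod>i<N. u*p^i*v - 1) = (\<Prod>i<N. (-1) * (1 - p^i*(u*v)))"
      by (rule prod.cong) (auto simp: algebra_simps)
    also have "\<dots> = (-1)^N * (\<Prod>i<N. (1 - p^i*(u*v)))" by (subst prod.distrib) simp
    finally show ?thesis by (simp add: hom)
  qed
  also have C: "(\<Prod>i<N. u*p^i*v) = (u*v)^N * - ((-1)^N)"
  proof -
    have "(\<Prod>i<N. u*p^i*v) = (\<Prod>i<N. (u*v) * p^i)"
      by (rule prod.cong) (auto simp: algebra_simps)
    thus ?thesis by (simp add: prod.distrib prodp)
  qed
  finally show ?thesis
    using u v by (cases "even N") (auto simp: field_simps power_mult_distrib)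
qed

lemma Dprod:
  assumes s: "s \<noteq> 0"
  shows "(\<Prod>i<N. p^i*s - inverse(p^i*s)) = - (1 - s^N) * (1 - (-1)^N * s^N) / s^N"
proof -
  have pi: "p^i \<noteq> 0" for i using p0 by simp
  have "(\<Prod>i<N. p^i*s - inverse(p^i*s)) = (\<Prod>i<N. (p^i*s - 1) * (p^i*s + 1) / (p^i*s))"
    by (rule prod.cong) (auto simp: s p0 field_simps)
  also have "\<dots> = (\<Prod>i<N. p^i*s - 1) * (\<Prod>i<N. p^i*s + 1) / (\<Prod>i<N. p^i*s)"
    by (simp add: prod_dividef prod.distrib)
  also have "(\<Prod>i<N. p^i*s - 1) = (-1)^N * (1 - s^N)"
  proof -
    have "(\<Prod>i<N. p^i*s - 1) = (\<Prod>i<N. (-1) * (1 - p^i*s))"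
      by (rule prod.cong) (auto simp: algebra_simps)
    also have "\<dots> = (-1)^N * (\<Prod>i<N. (1 - p^i*s))" by (subst prod.distrib) simp
    finally show ?thesis by (simp add: hom)
  qed
  also have "(\<Prod>i<N. p^i*s + 1) = 1 - (-s)^N"
  proof -
    have "(\<Prod>i<N. p^i*s + 1) = (\<Prod>i<N. 1 - p^i*(-s))"
      by (rule prod.cong) (auto simp: algebra_simps)
    also have "\<dots> = 1 - (-s)^N" using hom[of 1 "-s"] by simp
    finally show ?thesis .
  qed
  also have "(\<Prod>i<N. p^i*s) = s^N * - ((-1)^N)"
    by (simp add: prod.distrib prodp)
  finally show ?thesis
    using s by (cases "even N") (auto simp: field_simps)
qed


lemma kprod:
  assumes u: "u \<noteq> 0" and a: "a \<noteq> 0" and b: "b \<noteq> 0"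
  shows "(\<Prod>i<N. kappa (a + inverse a) (b + inverse b) (u*p^i + inverse(u*p^i)))
       = kappa (a^N + inverse a ^ N) (b^N + inverse b ^ N) (-((-1)^N) * (u^N + inverse (u^N)))"
proof -
  have "(\<Prod>i<N. kappa (a + inverse a) (b + inverse b) (u*p^i + inverse(u*p^i)))
      = (\<Prod>i<N. (u*p^i + inverse(u*p^i) - (-(a*b)) - inverse (-(a*b)))
                * (u*p^i + inverse(u*p^i) - (-(a/b)) - inverse (-(a/b))))"
  proof (rule prod.cong)
    fix i
    show "kappa (a + inverse a) (b + inverse b) (u*p^i + inverse(u*p^i))
      = (u*p^i + inverse(u*p^i) - (-(a*b)) - inverse (-(a*b)))
                * (u*p^i + inverse(u*p^i) - (-(a/b)) - inverse (-(a/b)))"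
      unfolding kappa_fact[OF a b] by (simp add: inverse_minus_eq)
  qed simp
  also have "\<dots> = (\<Prod>i<N. (u*p^i + inverse(u*p^i) - (-(a*b)) - inverse (-(a*b))))
                * (\<Prod>i<N. (u*p^i + inverse(u*p^i) - (-(a/b)) - inverse (-(a/b))))"
    by (simp add: prod.distrib)
  also have "\<dots> = (- ((-1)^N) * ((u^N + inverse(u^N)) - ((-(a*b))^N + inverse((-(a*b))^N))))
                 * (- ((-1)^N) * ((u^N + inverse(u^N)) - ((-(a/b))^N + inverse((-(a/b))^N))))"
    using a b u by (simp only: Gprod[OF u, of "-(a*b)"] Gprod[OF u, of "-(a/b)"] neg_equal_0_iff_equal divide_eq_0_iff mult_eq_0_iff simp_thms)
  also have "\<dots> = kappa (a^N + inverse a ^ N) (b^N + inverse b ^ N) (-((-1)^N) * (u^N + inverse (u^N)))"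
    using a b u
    by (subst kappa_fact[where x="a^N" and y="b^N", simplified power_inverse[symmetric]])
       ((simp add: power_inverse)+, cases "even N", (auto simp: field_simps power_mult_distrib power_divide))
  finally show ?thesis .
qed

end


lemma cheb_inv0: "y = x + inverse x \<Longrightarrow> x \<noteq> 0 \<Longrightarrow> cheb n y = x^n + inverse x ^ n"
proof (induction n y rule: cheb.induct)
  case (3 n y)
  have "cheb (Suc (Suc n)) y = y * cheb (Suc n) y - cheb n y" by simp
  also have "\<dots> = (x + inverse x) * (x^Suc n + inverse x^Suc n) - (x^n + inverse x^n)"
    using 3 by simp
  also have "\<dots> = x^Suc (Suc n) + inverse x ^ Suc (Suc n)" using 3(4)
    by (simp add: field_simps)
  finally show ?case .
qed auto

lemma cheb_inv: "x \<noteq> 0 \<Longrightarrow> cheb n (x + inverse x) = x^n + inverse x ^ n"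
  using cheb_inv0 by blast

lemma exists_inv_sum: "\<exists>x::complex. x \<noteq> 0 \<and> w = x + inverse x"
proof -
  define d where "d = csqrt (w^2 - 4)"
  have d2: "d^2 = w^2 - 4" unfolding d_def by simp
  have prod: "((w + d)/2) * ((w - d)/2) = 1" using d2
    by (simp add: field_simps power2_eq_square)
  hence nz: "(w + d)/2 \<noteq> 0" by auto
  have inv: "inverse ((w + d)/2) = (w - d)/2" by (rule inverse_unique[OF prod])
  have "w = (w+d)/2 + inverse ((w + d)/2)" unfolding inv by (simp add: field_simps)
  thus ?thesis using nz by blast
qed

lemma image_lemma:
  fixes r :: "nat \<Rightarrow> complex"
  assumes N0: "N > 0"
  shows "(\<lambda>(s, t). (\<Prod>i<N. s i, \<Prod>i<N. t i)) `
           {(s, t). (\<forall>i < N. s i * t i = r i) \<and> (\<forall>i \<ge> N. s i = 0 \<and> t i = 0)}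
         = {(x, y). x * y = (\<Prod>i<N. r i)}"
  (is "?f ` ?E = ?C")
proof
  show "?f ` ?E \<subseteq> ?C"
  proof clarify
    fix s t :: "nat \<Rightarrow> complex" assume h: "\<forall>i<N. s i * t i = r i"
    have "(\<Prod>i<N. s i) * (\<Prod>i<N. t i) = (\<Prod>i<N. s i * t i)" by (simp add: prod.distrib)
    also have "\<dots> = (\<Prod>i<N. r i)" using h by (intro prod.cong) auto
    finally show "(\<Prod>i<N. s i) * (\<Prod>i<N. t i) = (\<Prod>i<N. r i)" .
  qed
next
  show "?C \<subseteq> ?f ` ?E"
  proof clarify
    fix x y assume xy: "x * y = (\<Prod>i<N. r i)"
    have delta: "(\<Prod>i<N. if i = j then a else if i < N then 1 else 0) = a" if "j < N" for j :: nat and a :: complex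
    proof -
      have "(\<Prod>i<N. if i = j then a else if i < N then 1 else 0) = (\<Prod>i<N. if i = j then a else 1)"
        by (rule prod.cong) auto
      also have "\<dots> = a" using that by (simp add: prod.delta)
      finally show ?thesis .
    qed
    show "(x, y) \<in> ?f ` ?E"
    proof (cases "(\<Prod>i<N. r i) = 0")
      case False
      hence x0: "x \<noteq> 0" using xy by auto
      have r0: "r i \<noteq> 0" if "i < N" for i using False that by auto
      define s where "s = (\<lambda>i. if i = 0 then x else if i < N then 1 else (0::complex))"
      define t where "t = (\<lambda>i. if i < N then r i / s i else 0)"
      have s0: "s i \<noteq> 0" if "i < N" for i using that x0 by (auto simp: s_def)
      have ps: "(\<Prod>i<N. s i) = x" unfolding s_def using delta[OF N0] by simp
      have "(\<Prod>i<N. t i) = (\<Prod>i<N. r i / s i)" unfolding t_def by (rule prod.cong) auto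
      also have "\<dots> = (\<Prod>i<N. r i) / x" by (simp add: prod_dividef ps)
      also have "\<dots> = y" using xy x0 by (simp add: field_simps)
      finally have pt: "(\<Prod>i<N. t i) = y" .
      have "(s, t) \<in> ?E" using s0 N0 by (auto simp: t_def s_def)
      thus ?thesis using ps pt by force
    next
      case True
      then obtain j where j: "j < N" "r j = 0" by auto
      from True xy have "x * y = 0" by simp
      hence "x = 0 \<or> y = 0" by simp
      thus ?thesis
      proof
        assume y0: "y = 0"
        define s where "s = (\<lambda>i. if i = j then x else if i < N then 1 else (0::complex))"
        define t where "t = (\<lambda>i. if i = j then 0 else if i < N then r i else (0::complex))"
        have ps: "(\<Prod>i<N. s i) = x" unfolding s_def using delta[OF j(1)] by simp
        have pt: "(\<Prod>i<N. t i) = y" unfolding t_def y0 using j(1)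
          by (intro prod_zero) auto
        have "(s, t) \<in> ?E" using j by (auto simp: t_def s_def)
        thus ?thesis using ps pt by force
      next
        assume x0: "x = 0"
        define s where "s = (\<lambda>i. if i = j then 0 else if i < N then r i else (0::complex))"
        define t where "t = (\<lambda>i. if i = j then y else if i < N then 1 else (0::complex))"
        have pt: "(\<Prod>i<N. t i) = y" unfolding t_def using delta[OF j(1)] by simp
        have ps: "(\<Prod>i<N. s i) = x" unfolding s_def x0 using j(1)
          by (intro prod_zero) auto
        have "(s, t) \<in> ?E" using j by (auto simp: t_def s_def)
        thus ?thesis using ps pt by force
      qed
    qed
  qed
qed



theorem mainTheorem18:
  fixes q \<sigma> w1 w2 w3 w4 :: complex
  assumes "\<exists>n>0. q^n = 1"
    and "q^8 \<noteq> 1"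
    and "\<sigma> \<noteq> 0"
    and "(q^((ordN q)^2))^2 * (\<sigma>^(ordN q) + inverse (\<sigma>^(ordN q))) \<noteq> 2"
    and "(q^((ordN q)^2))^2 * (\<sigma>^(ordN q) + inverse (\<sigma>^(ordN q))) \<noteq> -2"
  shows "(\<lambda>(s, t). (\<Prod>i<ordN q. s i, \<Prod>i<ordN q. t i)) ` E0 q \<sigma> w1 w2 w3 w4
         = {(x, y). x * y = Rfun (ordN q)
              ((q^((ordN q)^2))^2 * (\<sigma>^(ordN q) + inverse (\<sigma>^(ordN q)))) w1 w2 w3 w4}"
proof -
  define N where "N = ordN q"
  define p where "p = q^4"
  define z0 where "z0 = (q^((ordN q)^2))^2 * (\<sigma>^(ordN q) + inverse (\<sigma>^(ordN q)))"
  have sig: "\<sigma> \<noteq> 0" by fact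
  obtain n where n: "n > 0" "q^n = 1" using assms(1) by blast
  have q0: "q \<noteq> 0" using n by (cases "q = 0") (auto simp: power_0_left)
  have ex: "\<exists>n. n > 0 \<and> (q^4)^n = 1"
    using n by (intro exI[of _ n]) (simp add: power_mult[symmetric] mult.commute power_mult)
  have NL: "N > 0 \<and> p^N = 1" unfolding N_def ordN_def p_def by (rule LeastI_ex[OF ex])
  hence N0: "N > 0" and pN: "p^N = 1" by auto
  have prim: "p^k \<noteq> 1" if "0 < k" "k < N" for k
    using not_less_Least[of k "\<lambda>n. n > 0 \<and> (q^4)^n = 1"] that
    unfolding N_def ordN_def p_def by auto
  define u where "u = q^2 * \<sigma>"
  have u0: "u \<noteq> 0" using q0 sig by (simp add: u_def)
  have qpow: "q^(4*i) = p^i" for i by (simp add: p_def power_mult)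
  have lam'_eq: "lam' q \<sigma> i = u*p^i + inverse (u*p^i)" for i
    unfolding lam'_def u_def by (simp add: power_add qpow[symmetric] field_simps power2_eq_square)
  have lamhat_eq: "lamhat q \<sigma> i = p^i*\<sigma> - inverse (p^i*\<sigma>)" for i
    unfolding lamhat_def by (simp add: qpow)
  have lamhat'_eq: "lamhat' q \<sigma> i = p^i*u - inverse (p^i*u)" for i
    unfolding lamhat'_def u_def by (simp add: power_add qpow[symmetric] field_simps power2_eq_square)
  obtain x1 where x1: "x1 \<noteq> 0" "w1 = x1 + inverse x1" using exists_inv_sum by blast
  obtain x2 where x2: "x2 \<noteq> 0" "w2 = x2 + inverse x2" using exists_inv_sum by blast
  obtain x3 where x3: "x3 \<noteq> 0" "w3 = x3 + inverse x3" using exists_inv_sum by blast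
  obtain x4 where x4: "x4 \<noteq> 0" "w4 = x4 + inverse x4" using exists_inv_sum by blast
  define e where "e = q^(2*N)"
  have e2: "e^2 = 1" using pN by (simp add: e_def p_def power_mult[symmetric] mult.commute)
  hence e_cases: "e = 1 \<or> e = -1" by (simp add: power2_eq_1_iff)
  have even_e: "e = -1" if "even N"
  proof (rule ccontr)
    assume "e \<noteq> -1"
    hence "e = 1" using e_cases by simp
    obtain k where k: "N = 2*k" using \<open>even N\<close> by blast
    have "p^k = e" unfolding e_def p_def k by (simp add: power_mult[symmetric] mult.commute)
    moreover have "0 < k" "k < N" using k N0 by auto
    ultimately show False using prim \<open>e = 1\<close> by auto
  qed
  define S where "S = \<sigma>^N"
  have S0: "S \<noteq> 0" using sig by (simp add: S_def)
  have uN: "u^N = e * S" unfolding u_def e_def S_def by (simp add: power_mult_distrib power_mult)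
  have z0_eq: "z0 = - ((-1)^N) * (u^N + inverse (u^N))"
  proof -
    have "(q^(N^2))^2 = e^N"
    proof -
      have "(q^(N^2))^2 = q^(N*N + N*N)" by (simp add: power2_eq_square power_add)
      also have "N*N + N*N = (2*N)*N" by simp
      finally show ?thesis unfolding e_def by (simp only: power_mult)
    qed
    hence z: "z0 = e^N * (S + inverse S)" unfolding z0_def N_def[symmetric] S_def by simp
    show ?thesis
    proof (cases "even N")
      case True
      thus ?thesis using even_e[OF True] z uN S0 by (simp add: field_simps)
    next
      case False
      have "(-1::complex)^N = -1" using False by simp
      moreover have "inverse (e*S) = e * inverse S" using e_cases by auto
      ultimately show ?thesis using z uN S0 e_cases by (auto simp: algebra_simps)
    qed
  qed
  have W: "cheb N (x + inverse x) = x^N + inverse x ^ N" if "x \<noteq> 0" for x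
    using cheb_inv[OF that] by simp
  have num12: "(\<Prod>i<N. kappa w1 w2 (lam' q \<sigma> i)) = kappa (cheb N w1) (cheb N w2) z0"
    unfolding lam'_eq x1(2) x2(2) W[OF x1(1)] W[OF x2(1)] z0_eq
    by (rule kprod[OF pN prim N0 u0 x1(1) x2(1)])
  have num34: "(\<Prod>i<N. kappa w3 w4 (lam' q \<sigma> i)) = kappa (cheb N w3) (cheb N w4) z0"
    unfolding lam'_eq x3(2) x4(2) W[OF x3(1)] W[OF x4(1)] z0_eq
    by (rule kprod[OF pN prim N0 u0 x3(1) x4(1)])
  have D1: "(\<Prod>i<N. lamhat q \<sigma> i) = - (1 - S) * (1 - (-1)^N * S) / S"
    unfolding lamhat_eq S_def by (rule Dprod[OF pN prim N0 sig])
  have D2: "(\<Prod>i<N. lamhat' q \<sigma> i) = - (1 - e*S) * (1 - (-1)^N * (e*S)) / (e*S)"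
    unfolding lamhat'_eq uN[symmetric] by (rule Dprod[OF pN prim N0 u0])
  have shift: "(\<Prod>i<N. lamhat q \<sigma> (i+1)) = (\<Prod>i<N. lamhat q \<sigma> i)"
  proof -
    obtain m where m: "N = Suc m" using N0 by (cases N) auto
    have lN: "lamhat q \<sigma> N = lamhat q \<sigma> 0" unfolding lamhat_eq using pN by simp
    have "(\<Prod>i<N. lamhat q \<sigma> i) = lamhat q \<sigma> 0 * (\<Prod>i<m. lamhat q \<sigma> (Suc i))"
      unfolding m by (rule prod.lessThan_Suc_shift)
    moreover have "(\<Prod>i<N. lamhat q \<sigma> (i+1)) = (\<Prod>i<m. lamhat q \<sigma> (Suc i)) * lamhat q \<sigma> N"
      unfolding m by simp
    ultimately show ?thesis using lN by (simp add: mult.commute)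
  qed
  have den: "((\<Prod>i<N. lamhat q \<sigma> i) * (\<Prod>i<N. lamhat q \<sigma> i) * (\<Prod>i<N. lamhat' q \<sigma> i)^2)
             = (z0^2 - 4)^2"
  proof -
    have z0S: "z0 = - ((-1)^N) * e * (S + inverse S)"
    proof -
      have inv: "inverse (e*S) = e * inverse S" using e_cases by auto
      show ?thesis unfolding z0_eq uN inv by (simp add: algebra_simps)
    qed
    show ?thesis unfolding D1 D2 z0S
    proof (cases "even N")
      case True
      thus "(- (1 - S) * (1 - (-1)^N * S) / S) * (- (1 - S) * (1 - (-1)^N * S) / S) *
            (- (1 - e*S) * (1 - (-1)^N * (e*S)) / (e*S))^2 = ((- ((-1)^N) * e * (S + inverse S))^2 - 4)^2"
        using even_e[OF True] S0 by (simp add: field_simps) (simp add: eval_nat_numeral algebra_simps)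
    next
      case False
      thus "(- (1 - S) * (1 - (-1)^N * S) / S) * (- (1 - S) * (1 - (-1)^N * S) / S) *
            (- (1 - e*S) * (1 - (-1)^N * (e*S)) / (e*S))^2 = ((- ((-1)^N) * e * (S + inverse S))^2 - 4)^2"
        using e_cases S0 by (auto simp: field_simps; simp add: eval_nat_numeral algebra_simps)
    qed
  qed
  have prodr: "(\<Prod>i<N. r_fun q \<sigma> w1 w2 w3 w4 i) = Rfun N z0 w1 w2 w3 w4"
  proof -
    have "(\<Prod>i<N. r_fun q \<sigma> w1 w2 w3 w4 i)
      = (\<Prod>i<N. kappa w1 w2 (lam' q \<sigma> i)) * (\<Prod>i<N. kappa w3 w4 (lam' q \<sigma> i))
        / ((\<Prod>i<N. lamhat q \<sigma> i) * (\<Prod>i<N. lamhat q \<sigma> (i+1)) * (\<Prod>i<N. lamhat' q \<sigma> i)^2)"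
      unfolding r_fun_def by (simp add: prod_dividef prod.distrib prod_power_distrib)
    also have "\<dots> = Rfun N z0 w1 w2 w3 w4"
      unfolding shift den num12 num34 Rfun_def ..
    finally show ?thesis .
  qed
  have z0N: "z0 = (q^(N^2))^2 * (\<sigma>^N + inverse (\<sigma>^N))" unfolding z0_def N_def ..
  show ?thesis
    unfolding E0_def N_def[symmetric] unfolding z0N[symmetric] prodr[symmetric]
    by (rule image_lemma[OF N0])
qed

end
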